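(* Let $p\in\mathbb{N}$ and let $X_1,\dots,X_n$ be i.i.d. random vectors in $[0,1]^p$ with density $f_X$ satisfying $0<c_X\le f_X\le C_X$. Let $\delta=\delta_n$ with $\delta^{-1}\in\mathbb{N}$, and suppose that for some integer $\nu\ge4$, $$\frac{(\log n)^5}{\delta^pn^{1-2/\nu}}\to0.$$ Let $p_\delta(x)=\mathbb{P}(X_1\in A_\delta(x))$ and $\hat p_\delta(x)=\frac1n\sum_{i=1}^n\mathbb{I}\{X_i\in A_\delta(x)\}$. Then $$\sup_{x\in[0,1]^p}\Big|\frac{\hat p_\delta(x)}{p_\delta(x)}-1\Big|=o_{\mathbb{P}}\big((\log n)^{-3/2}\big).$$
   Context: For $\delta^{-1}\in\mathbb{N}$, $[0,1]^p$ is partitioned by the equidistant grid of edge length $\delta$ into $\delta^{-p}$ hypercubes of volume $\delta^p$; $A_\delta(x)$ denotes the hypercube of this partition containing $x$. *)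

theory Defs
  imports "HOL-Probability.Probability"
begin

definition unit_cube :: "(real ^ 'p) set" where
  "unit_cube = {x. \<forall>j. 0 \<le> x $ j \<and> x $ j \<le> 1}"

text \<open>Grid with edge length delta = 1/m (m = delta^{-1} a positive natural number).
  Coordinate t in [0,1] lies in cell number min(floor(t*m), m-1), i.e. the cells are
  [k/m,(k+1)/m) for k < m-1 and the last one is [(m-1)/m, 1].\<close>
definition cell_index :: "nat \<Rightarrow> real \<Rightarrow> nat" where
  "cell_index m t = min (nat \<lfloor>t * real m\<rfloor>) (m - 1)"

definition grid_cell :: "nat \<Rightarrow> real ^ 'p \<Rightarrow> (real ^ 'p) set" where
  "grid_cell m x = {y \<in> unit_cube. \<forall>j. cell_index m (y $ j) = cell_index m (x $ j)}"

end

theory Submission imports Defs "HOL-Real_Asymp.Real_Asymp" begin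


context prob_space
begin

lemma mgf_bernoulli_sum:
  fixes Y :: "'i \<Rightarrow> 'a \<Rightarrow> real"
  assumes "finite I" "indep_vars (\<lambda>_. borel) Y I"
    and meas: "\<And>i. i\<in>I \<Longrightarrow> Y i \<in> borel_measurable M"
    and zo: "\<And>i \<omega>. i\<in>I \<Longrightarrow> \<omega>\<in>space M \<Longrightarrow> Y i \<omega> = 0 \<or> Y i \<omega> = 1"
    and ex: "\<And>i. i \<in> I \<Longrightarrow> expectation (Y i) = q"
  shows "expectation (\<lambda>\<omega>. exp (l * (\<Sum>i\<in>I. Y i \<omega>))) = (1 + q*(exp l - 1))^card I"
    and "integrable M (\<lambda>\<omega>. exp (l * (\<Sum>i\<in>I. Y i \<omega>)))"
proof -
  have eq: "(\<lambda>\<omega>. exp (l * (\<Sum>i\<in>I. Y i \<omega>))) = (\<lambda>\<omega>. \<Prod>i\<in>I. exp (l * Y i \<omega>))"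
    by (simp add: sum_distrib_left exp_sum assms(1))
  have ind: "indep_vars (\<lambda>_. borel) (\<lambda>i \<omega>. exp (l * Y i \<omega>)) I"
    using indep_vars_compose2[OF assms(2), of "\<lambda>i x. exp (l * x)" "\<lambda>_. borel"] by simp
  have int: "integrable M (Y i)" if "i \<in> I" for i
  proof (rule integrable_const_bound[where B=1])
    show "AE x in M. norm (Y i x) \<le> 1" using zo[OF that] by (intro AE_I2) (metis abs_one abs_zero order_refl zero_le_one real_norm_def)
  qed (use meas that in auto)
  have e1: "expectation (\<lambda>\<omega>. exp (l * Y i \<omega>)) = 1 + q*(exp l - 1)" if "i \<in> I" for i
  proof -
    have "expectation (\<lambda>\<omega>. exp (l * Y i \<omega>)) = expectation (\<lambda>\<omega>. 1 + (exp l - 1) * Y i \<omega>)"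
      by (rule Bochner_Integration.integral_cong[OF refl]) (use zo[OF that] in force)
    also have "\<dots> = 1 + (exp l - 1) * q" using int[OF that] ex[OF that] prob_space by simp
    finally show ?thesis by simp
  qed
  have int2: "integrable M (\<lambda>\<omega>. exp (l * Y i \<omega>))" if "i \<in> I" for i
  proof (rule integrable_const_bound[where B="exp \<bar>l\<bar>"])
    show "AE x in M. norm (exp (l * Y i x)) \<le> exp \<bar>l\<bar>" using zo[OF that] by (intro AE_I2) (metis abs_ge_self exp_le_cancel_iff mult_cancel_left1 mult_zero_right abs_ge_zero exp_gt_zero abs_exp_cancel real_norm_def)
  qed (use meas that in auto)
  show "integrable M (\<lambda>\<omega>. exp (l * (\<Sum>i\<in>I. Y i \<omega>)))"
    unfolding eq by (rule indep_vars_integrable[OF assms(1) ind]) (use int2 in auto)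
  show "expectation (\<lambda>\<omega>. exp (l * (\<Sum>i\<in>I. Y i \<omega>))) = (1 + q*(exp l - 1))^card I"
    unfolding eq using indep_vars_lebesgue_integral[OF assms(1) ind] int2 e1 by simp
qed

lemma exp_markov:
  fixes S :: "'a \<Rightarrow> real"
  assumes "S \<in> borel_measurable M" "integrable M (\<lambda>\<omega>. exp (l * S \<omega>))"
  shows "prob {\<omega>\<in>space M. a \<le> l * S \<omega>} \<le> expectation (\<lambda>\<omega>. exp (l * S \<omega>)) / exp a"
proof -
  have "prob {\<omega>\<in>space M. a \<le> l * S \<omega>} = prob {\<omega>\<in>space M. exp a \<le> exp (l * S \<omega>)}" by simp
  also have "\<dots> \<le> expectation (\<lambda>\<omega>. exp (l * S \<omega>)) / exp a"
    by (rule integral_Markov_inequality_measure[OF assms(2), where A="space M"]) auto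
  finally show ?thesis .
qed

lemma chernoff_two_sided:
  fixes Y :: "'i \<Rightarrow> 'a \<Rightarrow> real" and q t :: real
  assumes "finite I" "indep_vars (\<lambda>_. borel) Y I"
    and meas: "\<And>i. i\<in>I \<Longrightarrow> Y i \<in> borel_measurable M"
    and zo: "\<And>i \<omega>. i\<in>I \<Longrightarrow> \<omega>\<in>space M \<Longrightarrow> Y i \<omega> = 0 \<or> Y i \<omega> = 1"
    and ex: "\<And>i. i \<in> I \<Longrightarrow> expectation (Y i) = q"
    and q: "0 \<le> q" and q1: "q \<le> 1" and t: "0 < t" "t \<le> 1"
  shows "prob {\<omega>\<in>space M. t * (card I * q) < \<bar>(\<Sum>i\<in>I. Y i \<omega>) - card I * q\<bar>}
          \<le> 2 * exp (- (card I * q * t^2 / 4))"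
proof -
  define N where "N = real (card I)"
  define S where "S = (\<lambda>\<omega>. \<Sum>i\<in>I. Y i \<omega>)"
  define l where "l = t / 2"
  have l: "0 < l" "l \<le> 1" using t by (auto simp: l_def)
  have N: "0 \<le> N" by (simp add: N_def)
  have Sm: "S \<in> borel_measurable M" unfolding S_def using meas by auto
  have mgf: "expectation (\<lambda>\<omega>. exp (r * S \<omega>)) \<le> exp (N * q * (exp r - 1))" for r
  proof -
    have "expectation (\<lambda>\<omega>. exp (r * S \<omega>)) = (1 + q*(exp r - 1))^card I"
      unfolding S_def by (rule mgf_bernoulli_sum[OF assms(1-5)])
    also have "\<dots> \<le> (exp (q*(exp r - 1)))^card I"
    proof (rule power_mono)
      show "1 + q * (exp r - 1) \<le> exp (q * (exp r - 1))" by (rule exp_ge_add_one_self)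
      have "0 \<le> q * exp r" using q by simp
      thus "0 \<le> 1 + q * (exp r - 1)" using q1 by (simp add: algebra_simps)
    qed
    also have "\<dots> = exp (N * q * (exp r - 1))" by (simp add: N_def exp_of_nat_mult[symmetric] mult.assoc)
    finally show ?thesis .
  qed
  have int: "integrable M (\<lambda>\<omega>. exp (r * S \<omega>))" for r
    unfolding S_def by (rule mgf_bernoulli_sum[OF assms(1-5)])
  have up: "prob {\<omega>\<in>space M. l * ((1 + t) * (N * q)) \<le> l * S \<omega>} \<le> exp (- (N * q * t^2 / 4))"
  proof -
    have "prob {\<omega>\<in>space M. l * ((1 + t) * (N * q)) \<le> l * S \<omega>}
        \<le> expectation (\<lambda>\<omega>. exp (l * S \<omega>)) / exp (l * ((1 + t) * (N * q)))"
      by (rule exp_markov[OF Sm int])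
    also have "\<dots> \<le> exp (N * q * (exp l - 1)) / exp (l * ((1 + t) * (N * q)))"
      by (intro divide_right_mono mgf) simp
    also have "\<dots> = exp (N * q * (exp l - 1) - l * ((1 + t) * (N * q)))" by (simp add: exp_diff)
    also have "\<dots> \<le> exp (- (N * q * t^2 / 4))"
    proof -
      have "exp l \<le> 1 + l + l^2" using exp_bound l by auto
      hence "N * q * (exp l - 1) \<le> N * q * (l + l^2)" using N q by (intro mult_left_mono) auto
      thus ?thesis by (simp add: l_def power2_eq_square algebra_simps)
    qed
    finally show ?thesis .
  qed
  have lo: "prob {\<omega>\<in>space M. (-l) * ((1 - t) * (N * q)) \<le> (-l) * S \<omega>} \<le> exp (- (N * q * t^2 / 4))"
  proof -
    have "prob {\<omega>\<in>space M. (-l) * ((1 - t) * (N * q)) \<le> (-l) * S \<omega>}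
        \<le> expectation (\<lambda>\<omega>. exp ((-l) * S \<omega>)) / exp ((-l) * ((1 - t) * (N * q)))"
      by (rule exp_markov[OF Sm int])
    also have "\<dots> \<le> exp (N * q * (exp (-l) - 1)) / exp ((-l) * ((1 - t) * (N * q)))"
      by (intro divide_right_mono mgf) simp
    also have "\<dots> = exp (N * q * (exp (-l) - 1) - (-l) * ((1 - t) * (N * q)))" by (simp only: exp_diff)
    also have "\<dots> \<le> exp (- (N * q * t^2 / 4))"
    proof -
      have "1 + l \<le> exp l" by (rule exp_ge_add_one_self)
      hence "exp (-l) \<le> 1 / (1 + l)" using l by (simp add: exp_minus field_simps)
      also have "\<dots> \<le> 1 - l + l^2" using l by (simp add: field_simps power2_eq_square)
      finally have "exp (-l) \<le> 1 - l + l^2" .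
      hence "N * q * (exp (-l) - 1) \<le> N * q * (-l + l^2)" using N q by (intro mult_left_mono) auto
      thus ?thesis by (simp add: l_def power2_eq_square algebra_simps)
    qed
    finally show ?thesis .
  qed
  have sub: "{\<omega>\<in>space M. t * (N * q) < \<bar>S \<omega> - N * q\<bar>} \<subseteq>
      {\<omega>\<in>space M. l * ((1 + t) * (N * q)) \<le> l * S \<omega>} \<union> {\<omega>\<in>space M. (-l) * ((1 - t) * (N * q)) \<le> (-l) * S \<omega>}"
  proof (intro subsetI)
    fix \<omega> assume "\<omega> \<in> {\<omega>\<in>space M. t * (N * q) < \<bar>S \<omega> - N * q\<bar>}"
    hence w: "\<omega> \<in> space M" "t * (N * q) < \<bar>S \<omega> - N * q\<bar>" by auto
    show "\<omega> \<in> {\<omega>\<in>space M. l * ((1 + t) * (N * q)) \<le> l * S \<omega>} \<union> {\<omega>\<in>space M. (-l) * ((1 - t) * (N * q)) \<le> (-l) * S \<omega>}"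
    proof (cases "S \<omega> \<ge> N * q")
      case True
      hence "(1 + t) * (N * q) \<le> S \<omega>" using w by (simp add: algebra_simps)
      hence "l * ((1 + t) * (N * q)) \<le> l * S \<omega>" using l by (intro mult_left_mono) auto
      thus ?thesis using w by auto
    next
      case False
      hence "S \<omega> \<le> (1 - t) * (N * q)" using w by (simp add: algebra_simps)
      hence "l * S \<omega> \<le> l * ((1 - t) * (N * q))" using l by (intro mult_left_mono) auto
      thus ?thesis using w by auto
    qed
  qed
  have "prob {\<omega>\<in>space M. t * (N * q) < \<bar>S \<omega> - N * q\<bar>} \<le>
      prob ({\<omega>\<in>space M. l * ((1 + t) * (N * q)) \<le> l * S \<omega>} \<union> {\<omega>\<in>space M. (-l) * ((1 - t) * (N * q)) \<le> (-l) * S \<omega>})"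
    by (rule finite_measure_mono[OF sub]) (use Sm in measurable)
  also have "\<dots> \<le> prob {\<omega>\<in>space M. l * ((1 + t) * (N * q)) \<le> l * S \<omega>} + prob {\<omega>\<in>space M. (-l) * ((1 - t) * (N * q)) \<le> (-l) * S \<omega>}"
    by (rule measure_Un_le) (use Sm in measurable)
  also have "\<dots> \<le> 2 * exp (- (N * q * t^2 / 4))" using up lo by simp
  finally show ?thesis by (simp add: N_def S_def)
qed

end


lemma cell_index_meas[measurable]: "cell_index m \<in> borel \<rightarrow>\<^sub>M count_space UNIV"
  unfolding cell_index_def by measurable

lemma grid_cell_borel: fixes x :: "real^'p" shows "grid_cell m x \<in> sets borel"
proof -
  have "Measurable.pred borel (\<lambda>y::real^'p. y \<in> unit_cube \<and> (\<forall>j. cell_index m (y $ j) = cell_index m (x $ j)))"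
    unfolding unit_cube_def by (measurable; (rule measurable_compose[OF _ cell_index_meas])?; measurable)
  thus ?thesis unfolding grid_cell_def by (simp add: pred_def)
qed
lemma cell_index_lt: "m \<ge> 1 \<Longrightarrow> cell_index m t < m"
  unfolding cell_index_def by auto

lemma cells_finite_card:
  assumes "m \<ge> 1"
  shows "finite (grid_cell m ` (unit_cube :: (real^'p) set))"
    and "card (grid_cell m ` (unit_cube :: (real^'p) set)) \<le> m ^ CARD('p)"
proof -
  define K where "K = PiE (UNIV :: 'p set) (\<lambda>_. {..<m})"
  define G where "G = (\<lambda>k. {y::real^'p. y \<in> unit_cube \<and> (\<forall>j. cell_index m (y $ j) = k j)})"
  have sub: "grid_cell m ` (unit_cube :: (real^'p) set) \<subseteq> G ` K"
  proof
    fix C assume "C \<in> grid_cell m ` (unit_cube :: (real^'p) set)"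
    then obtain x where x: "C = grid_cell m x" by auto
    have "(\<lambda>j. cell_index m (x $ j)) \<in> K" unfolding K_def using cell_index_lt[OF assms] by auto
    moreover have "C = G (\<lambda>j. cell_index m (x $ j))" unfolding x G_def grid_cell_def by auto
    ultimately show "C \<in> G ` K" by blast
  qed
  have fK: "finite K" unfolding K_def by (intro finite_PiE) auto
  have cK: "card K = m ^ CARD('p)" unfolding K_def by (simp add: card_PiE)
  show "finite (grid_cell m ` (unit_cube :: (real^'p) set))" using sub fK finite_subset by blast
  have "card (grid_cell m ` (unit_cube :: (real^'p) set)) \<le> card (G ` K)"
    using sub fK by (intro card_mono) auto
  also have "\<dots> \<le> card K" using fK by (rule card_image_le)
  finally show "card (grid_cell m ` (unit_cube :: (real^'p) set)) \<le> m ^ CARD('p)" using cK by simp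
qed

lemma box_sub_cell:
  fixes x :: "real^'p"
  assumes "m \<ge> 1"
  shows "box (\<chi> j. real (cell_index m (x$j)) / m) (\<chi> j. (real (cell_index m (x$j)) + 1) / m) \<subseteq> grid_cell m x"
proof
  fix y assume "y \<in> box (\<chi> j. real (cell_index m (x$j)) / m) (\<chi> j. (real (cell_index m (x$j)) + 1) / m)"
  hence y: "real (cell_index m (x$j)) / m < y$j \<and> y$j < (real (cell_index m (x$j)) + 1) / m" for j
    by (simp add: mem_box_cart)
  have mp: "real m > 0" using assms by simp
  have lt: "cell_index m (x$j) + 1 \<le> m" for j using cell_index_lt[OF assms] by (simp add: Suc_le_eq)
  have A: "real (cell_index m (x$j)) < y$j * m \<and> y$j * m < real (cell_index m (x$j)) + 1" for j
    using y[of j] mp by (simp add: field_simps)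
  have fl: "\<lfloor>y$j * m\<rfloor> = int (cell_index m (x$j))" for j
    using A[of j] by (intro floor_unique) auto
  have ci: "cell_index m (y$j) = cell_index m (x$j)" for j
    using fl[of j] cell_index_lt[OF assms, of "x$j"] unfolding cell_index_def[of m "y$j"] by simp
  have "0 \<le> y$j" for j using y[of j] mp by (smt (verit) divide_nonneg_pos of_nat_0_le_iff)
  moreover have "y$j \<le> 1" for j
  proof -
    have "y$j < (real (cell_index m (x$j)) + 1) / m" using y by blast
    also have "\<dots> \<le> 1" using lt[of j] mp by (simp add: field_simps)
    finally show ?thesis by simp
  qed
  ultimately show "y \<in> grid_cell m x" unfolding grid_cell_def unit_cube_def using ci by auto
qed

lemma box_volume:
  fixes a :: "real^'p" and m :: nat
  assumes "m \<ge> 1"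
  shows "emeasure lborel (box (\<chi> j. a$j / m) (\<chi> j. (a$j + 1) / m)) = ennreal ((1 / m) ^ CARD('p))"
proof -
  have "emeasure lborel (box (\<chi> j. a$j / m) (\<chi> j. (a$j + 1) / m)) = ennreal (measure lborel (box (\<chi> j. a$j / m) (\<chi> j. (a$j + 1) / m)))"
    by (simp add: emeasure_eq_measure2 emeasure_lborel_box_finite)
  also have "measure lborel (box (\<chi> j. a$j / m) (\<chi> j. (a$j + 1) / m)) = measure lborel (cbox (\<chi> j. a$j / m) (\<chi> j. (a$j + 1) / m))"
    by (simp only: measure_lborel_box_eq measure_lborel_cbox_eq)
  also have "\<dots> = (\<Prod>j\<in>UNIV. (a$j + 1) / m - a$j / m)"
    using assms by (subst content_cbox_cart) (auto simp: interval_ne_empty_cart divide_right_mono)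
  also have "\<dots> = (1 / m) ^ CARD('p)" by (simp add: diff_divide_distrib[symmetric])
  finally show ?thesis .
qed


lemma cell_prob:
  fixes X :: "nat \<Rightarrow> 'a \<Rightarrow> real ^ 'p" and x :: "real ^ 'p"
  assumes "prob_space M"
    and dist: "\<And>i. distributed M lborel (X i) (\<lambda>x. ennreal (fX x))"
    and low: "\<And>x. x \<in> unit_cube \<Longrightarrow> cX \<le> fX x"
    and m: "m \<ge> 1" and cpos: "0 < cX"
  shows "measure M {\<omega>\<in>space M. X i \<omega> \<in> grid_cell m x} = measure M {\<omega>\<in>space M. X 1 \<omega> \<in> grid_cell m x}"
    and "cX * (1 / real m) ^ CARD('p) \<le> measure M {\<omega>\<in>space M. X i \<omega> \<in> grid_cell m x}"
proof -
  interpret P: prob_space M by (rule assms(1))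
  define C where "C = grid_cell m x"
  have Cb: "C \<in> sets lborel" unfolding C_def using grid_cell_borel by simp
  have em: "emeasure M {\<omega>\<in>space M. X j \<omega> \<in> C} = emeasure (density lborel (\<lambda>x. ennreal (fX x))) C" for j
  proof -
    have meas: "X j \<in> measurable M lborel" using distributed_measurable[OF dist[of j]] by simp
    have "emeasure M {\<omega>\<in>space M. X j \<omega> \<in> C} = emeasure (distr M lborel (X j)) C"
      using emeasure_distr[OF meas Cb] by (simp add: vimage_def Int_def conj_commute)
    also have "\<dots> = emeasure (density lborel (\<lambda>x. ennreal (fX x))) C"
      using distributed_distr_eq_density[OF dist[of j]] by simp
    finally show ?thesis .
  qed
  show "measure M {\<omega>\<in>space M. X i \<omega> \<in> grid_cell m x} = measure M {\<omega>\<in>space M. X 1 \<omega> \<in> grid_cell m x}"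
    using em[of i] em[of 1] unfolding C_def measure_def by simp
  define a where "a = (\<chi> j. real (cell_index m (x$j)))"
  define Bx where "Bx = box (\<chi> j. a$j / m) (\<chi> j. (a$j + 1) / m)"
  have BC: "Bx \<subseteq> C" unfolding Bx_def C_def a_def using box_sub_cell[OF m, of x] by simp
  have Cu: "C \<subseteq> unit_cube" unfolding C_def grid_cell_def by auto
  have fm: "(\<lambda>x. ennreal (fX x)) \<in> borel_measurable lborel" using distributed_borel_measurable[OF dist[of i]] .
  have "ennreal (cX * (1 / real m) ^ CARD('p)) = ennreal cX * emeasure lborel Bx"
    unfolding Bx_def using box_volume[OF m, of a] assms
    using cpos by (simp add: ennreal_mult)
  also have "\<dots> = (\<integral>\<^sup>+ y. ennreal cX * indicator Bx y \<partial>lborel)"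
    by (simp add: Bx_def nn_integral_cmult_indicator)
  also have "\<dots> \<le> (\<integral>\<^sup>+ y. ennreal (fX y) * indicator C y \<partial>lborel)"
  proof (rule nn_integral_mono)
    fix y show "ennreal cX * indicator Bx y \<le> ennreal (fX y) * indicator C y"
    proof (cases "y \<in> Bx")
      case True
      hence "y \<in> C" "y \<in> unit_cube" using BC Cu by auto
      thus ?thesis using True low[of y] by (simp add: ennreal_leI)
    qed simp
  qed
  also have "\<dots> = emeasure (density lborel (\<lambda>x. ennreal (fX x))) C"
    using emeasure_density[OF fm Cb] by simp
  also have "\<dots> = emeasure M {\<omega>\<in>space M. X i \<omega> \<in> C}" using em[of i] by simp
  also have "\<dots> = ennreal (measure M {\<omega>\<in>space M. X i \<omega> \<in> C})" by (simp add: P.emeasure_eq_measure)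
  finally show "cX * (1 / real m) ^ CARD('p) \<le> measure M {\<omega>\<in>space M. X i \<omega> \<in> grid_cell m x}"
    unfolding C_def by (simp add: ennreal_le_iff)
qed



theorem lemma2:
  fixes M :: "'a measure"
    and X :: "nat \<Rightarrow> 'a \<Rightarrow> real ^ 'p"
    and fX :: "real ^ 'p \<Rightarrow> real"
    and cX CX :: real
    and m :: "nat \<Rightarrow> nat"
    and \<nu> :: nat
  assumes "prob_space M"
    and "prob_space.indep_vars M (\<lambda>_. borel) X UNIV"
    and "\<And>i. distributed M lborel (X i) (\<lambda>x. ennreal (fX x))"
    and "\<And>x. x \<notin> unit_cube \<Longrightarrow> fX x = 0"
    and "0 < cX"
    and "\<And>x. x \<in> unit_cube \<Longrightarrow> cX \<le> fX x \<and> fX x \<le> CX"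
    and "\<And>n. m n \<ge> 1"
    and "\<nu> \<ge> 4"
    and "(\<lambda>n. (ln (real n)) ^ 5 / ((1 / real (m n)) ^ CARD('p) * real n powr (1 - 2 / real \<nu>)))
           \<longlonglongrightarrow> 0"
  shows "\<forall>\<epsilon>>0. (\<lambda>n. measure M {\<omega> \<in> space M.
            (SUP x\<in>unit_cube.
               \<bar>((1 / real n) * real (card {i \<in> {1..n}. X i \<omega> \<in> grid_cell (m n) x}))
                  / measure M {\<omega>' \<in> space M. X 1 \<omega>' \<in> grid_cell (m n) x} - 1\<bar>)
            * (ln (real n)) powr (3 / 2) > \<epsilon>}) \<longlonglongrightarrow> 0"
  proof (intro allI impI)
  fix \<epsilon> :: real assume eps: "\<epsilon> > 0"
  interpret P: prob_space M by (rule assms(1))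
  note dist = assms(3)
  have Xm[measurable]: "X i \<in> borel_measurable M" for i
    using distributed_measurable[OF dist[of i]] by simp
  have low: "\<And>x. x \<in> unit_cube \<Longrightarrow> cX \<le> fX x" using assms(6) by blast
  define p where "p = CARD('p)"
  define r where "r = 1 - 2 / real \<nu>"
  have r: "r \<le> 1" unfolding r_def by simp
  define c where "c = cX * \<epsilon>^2 / 4"
  have c: "c > 0" unfolding c_def using assms(5) eps by simp
  define B where "B = (\<lambda>n::nat. 2 * real n * exp (-(c * ln (real n) ^ 2)))"
  have B: "B \<longlonglongrightarrow> 0" unfolding B_def using c by real_asymp
  have ev1: "eventually (\<lambda>n::nat. ln (real n) powr (3/2) > \<epsilon>) sequentially" by real_asymp
  have ev2: "eventually (\<lambda>n::nat. ln (real n) \<ge> 1) sequentially" by real_asymp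
  have ev3: "eventually (\<lambda>n. (ln (real n)) ^ 5 / ((1 / real (m n)) ^ CARD('p) * real n powr (1 - 2 / real \<nu>)) < 1) sequentially"
    by (rule order_tendstoD(2)[OF assms(9)]) simp
  have key: "measure M {\<omega> \<in> space M.
            (SUP x\<in>unit_cube.
               \<bar>((1 / real n) * real (card {i \<in> {1..n}. X i \<omega> \<in> grid_cell (m n) x}))
                  / measure M {\<omega>' \<in> space M. X 1 \<omega>' \<in> grid_cell (m n) x} - 1\<bar>)
            * (ln (real n)) powr (3 / 2) > \<epsilon>} \<le> B n"
    if n1: "ln (real n) powr (3/2) > \<epsilon>" and n2: "ln (real n) \<ge> 1"
      and n3: "(ln (real n)) ^ 5 / ((1 / real (m n)) ^ CARD('p) * real n powr (1 - 2 / real \<nu>)) < 1"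
    for n
  proof -
    define mm where "mm = m n"
    have mm: "mm \<ge> 1" unfolding mm_def using assms(7) by simp
    define lg where "lg = ln (real n)"
    have lg: "lg \<ge> 1" using n2 by (simp add: lg_def)
    have npos: "real n > 0" using lg unfolding lg_def by (cases "n = 0") auto
    define w where "w = (1 / real mm) ^ p"
    have wpos: "w > 0" unfolding w_def using mm by simp
    have mw: "real mm ^ p * w = 1" unfolding w_def using mm by (simp add: power_one_over power_divide)
    have A1: "lg ^ 5 < w * real n powr r"
      using n3 npos wpos unfolding lg_def w_def mm_def p_def r_def by (simp add: divide_less_eq mult_pos_pos)
    have n1': "real n \<ge> 1" using npos by (cases n) auto
    have A2: "real n powr r \<le> real n"
      using powr_mono[OF r n1'] npos by simp
    have A3: "lg ^ 5 * real mm ^ p \<le> real n"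
    proof -
      have "lg ^ 5 * real mm ^ p < w * real n powr r * real mm ^ p"
        using A1 mm by (intro mult_strict_right_mono) auto
      also have "\<dots> = real n powr r" using mw by (simp add: algebra_simps)
      finally show ?thesis using A2 by simp
    qed
    define L where "L = ln (real n) powr (3/2)"
    have Lpos: "L > 0" using n1 eps n2 unfolding L_def by simp
    define t where "t = \<epsilon> / L"
    have t: "0 < t" "t \<le> 1" using n1 eps Lpos unfolding t_def L_def by auto
    have L2: "L^2 = lg^3"
    proof -
      have "L^2 = lg powr (3/2) * lg powr (3/2)" by (simp add: L_def lg_def power2_eq_square)
      also have "\<dots> = lg powr 3" by (simp add: powr_add[symmetric])
      also have "\<dots> = lg ^ 3" using lg by (simp add: powr_numeral)
      finally show ?thesis .
    qed
    define cells where "cells = grid_cell mm ` (unit_cube :: (real^'p) set)"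
    have cfin: "finite cells" and ccard: "card cells \<le> mm ^ p"
      unfolding cells_def p_def using cells_finite_card[OF mm] by auto
    define q where "q = (\<lambda>C. measure M {\<omega>' \<in> space M. X 1 \<omega>' \<in> C})"
    define E where "E = (\<lambda>C. {\<omega>\<in>space M. t * (real (card {1..n}) * q C) < \<bar>(\<Sum>i\<in>{1..n}. indicator C (X i \<omega>)) - real (card {1..n}) * q C\<bar>})"
    have Cb: "C \<in> sets borel" if "C \<in> cells" for C using that grid_cell_borel unfolding cells_def by auto
    have Esets: "E C \<in> sets M" if "C \<in> cells" for C
    proof -
      have [measurable]: "C \<in> sets borel" using Cb[OF that] .
      show ?thesis unfolding E_def by measurable
    qed
    have qlow: "q C \<ge> cX * w" and qeq: "\<And>i. measure M {\<omega>\<in>space M. X i \<omega> \<in> C} = q C" and q1: "q C \<le> 1"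
      if Cc: "C \<in> cells" for C
    proof -
      obtain x where x: "C = grid_cell mm x" using Cc unfolding cells_def by blast
      show "q C \<ge> cX * w" unfolding q_def x w_def p_def
        by (rule cell_prob(2)[OF assms(1) dist low mm assms(5)])
      show "\<And>i. measure M {\<omega>\<in>space M. X i \<omega> \<in> C} = q C" unfolding q_def x
        by (rule cell_prob(1)[OF assms(1) dist low mm assms(5)])
      show "q C \<le> 1" unfolding q_def by simp
    qed
    have perE: "P.prob (E C) \<le> 2 * exp (- (c * lg ^ 2))" if C: "C \<in> cells" for C
    proof -
      have [measurable]: "C \<in> sets borel" using Cb[OF that] .
      have qpos: "q C > 0" using qlow[OF C] assms(5) wpos by (smt (verit) mult_pos_pos)
      have ind: "P.indep_vars (\<lambda>_. borel) (\<lambda>i \<omega>. indicator C (X i \<omega>) :: real) {1..n}"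
        using P.indep_vars_compose2[OF P.indep_vars_subset[OF assms(2), of "{1..n}"], of "\<lambda>i. indicator C" "\<lambda>_. borel"]
        by simp
      have exq: "P.expectation (\<lambda>\<omega>. indicator C (X i \<omega>) :: real) = q C" for i
      proof -
        have "P.expectation (\<lambda>\<omega>. indicator C (X i \<omega>) :: real) = P.expectation (indicator {\<omega>\<in>space M. X i \<omega> \<in> C})"
          by (rule Bochner_Integration.integral_cong[OF refl]) (auto simp: indicator_def)
        also have "\<dots> = measure M {\<omega>\<in>space M. X i \<omega> \<in> C}" by (simp add: Int_absorb2 subsetI)
        finally show ?thesis using qeq[OF C] by simp
      qed
      have "P.prob (E C) \<le> 2 * exp (- (real (card {1..n}) * q C * t^2 / 4))"
        unfolding E_def
        by (rule P.chernoff_two_sided[OF _ ind]) (auto simp: exq qpos less_imp_le q1[OF C] t split: split_indicator)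
      also have "\<dots> \<le> 2 * exp (- (c * lg ^ 2))"
      proof -
        have lgp: "lg > 0" using lg by simp
        have t2: "t^2 = \<epsilon>^2 / lg^3" using L2 by (simp add: t_def power_divide)
        have nw: "lg^5 \<le> real n * w"
        proof -
          have "lg^5 = lg ^ 5 * real mm ^ p * w" using mw by (simp add: mult.assoc)
          also have "\<dots> \<le> real n * w" using A3 wpos by (intro mult_right_mono) auto
          finally show ?thesis .
        qed
        have "c * lg ^ 2 = cX * \<epsilon>^2 / 4 * (lg^5 / lg^3)" using lgp
          by (simp add: c_def power_def)
        also have "\<dots> \<le> cX * \<epsilon>^2 / 4 * (real n * w / lg^3)"
          using nw lgp assms(5) by (intro mult_left_mono divide_right_mono) auto
        also have "\<dots> = real n * (cX * w) * (\<epsilon>^2 / lg^3) / 4" by (simp add: field_simps)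
        also have "\<dots> \<le> real n * q C * (\<epsilon>^2 / lg^3) / 4"
          using qlow[OF C] lgp by (intro divide_right_mono mult_right_mono mult_left_mono) auto
        finally have "c * lg ^ 2 \<le> real n * q C * t^2 / 4" using t2 by simp
        thus ?thesis by simp
      qed
      finally show ?thesis .
    qed
    have sub: "{\<omega> \<in> space M.
            (SUP x\<in>unit_cube.
               \<bar>((1 / real n) * real (card {i \<in> {1..n}. X i \<omega> \<in> grid_cell (m n) x}))
                  / measure M {\<omega>' \<in> space M. X 1 \<omega>' \<in> grid_cell (m n) x} - 1\<bar>)
            * (ln (real n)) powr (3 / 2) > \<epsilon>} \<subseteq> (\<Union>C\<in>cells. E C)"
    proof (intro subsetI)
      fix \<omega> assume om0: "\<omega> \<in> {\<omega> \<in> space M.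
            (SUP x\<in>unit_cube.
               \<bar>((1 / real n) * real (card {i \<in> {1..n}. X i \<omega> \<in> grid_cell (m n) x}))
                  / measure M {\<omega>' \<in> space M. X 1 \<omega>' \<in> grid_cell (m n) x} - 1\<bar>)
            * (ln (real n)) powr (3 / 2) > \<epsilon>}"
      define g where "g = (\<lambda>x. \<bar>((1 / real n) * real (card {i \<in> {1..n}. X i \<omega> \<in> grid_cell (m n) x}))
                  / measure M {\<omega>' \<in> space M. X 1 \<omega>' \<in> grid_cell (m n) x} - 1\<bar>)"
      have om: "\<omega> \<in> space M" and big: "(SUP x\<in>unit_cube. g x) * L > \<epsilon>"
        using om0 unfolding g_def L_def by auto
      have big2: "t < (SUP x\<in>unit_cube. g x)" using big Lpos unfolding t_def by (simp add: divide_less_eq)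
      define h where "h = (\<lambda>C. \<bar>((1 / real n) * real (card {i \<in> {1..n}. X i \<omega> \<in> C})) / q C - 1\<bar>)"
      have gh: "g x = h (grid_cell mm x)" for x by (simp add: g_def h_def q_def mm_def)
      have "g ` unit_cube = h ` cells" unfolding cells_def image_image gh ..
      hence bdd: "bdd_above (g ` unit_cube)" using cfin by simp
      have ne: "(unit_cube :: (real^'p) set) \<noteq> {}"
      proof -
        have "(0::real^'p) \<in> unit_cube" by (simp add: unit_cube_def)
        thus ?thesis by blast
      qed
      obtain x where x: "x \<in> unit_cube" and tx: "t < g x" using big2 less_cSUP_iff[OF ne bdd] by blast
      define C where "C = grid_cell mm x"
      have C: "C \<in> cells" unfolding C_def cells_def using x by blast
      have qpos: "q C > 0" using qlow[OF C] assms(5) wpos by (smt (verit) mult_pos_pos)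
      define S where "S = (\<Sum>i\<in>{1..n}. indicator C (X i \<omega>) :: real)"
      have S: "real (card {i \<in> {1..n}. X i \<omega> \<in> C}) = S"
        unfolding S_def by (simp add: indicator_def sum.If_cases Int_def)
      have "g x = \<bar>(S - n * q C) / (n * q C)\<bar>"
        unfolding gh C_def[symmetric] h_def S using npos qpos by (simp add: field_simps)
      also have "\<dots> = \<bar>S - n * q C\<bar> / (n * q C)" using npos qpos by simp
      finally have "t * (n * q C) < \<bar>S - n * q C\<bar>" using tx npos qpos by (simp add: pos_less_divide_eq)
      hence "\<omega> \<in> E C" unfolding E_def S_def using om by simp
      thus "\<omega> \<in> (\<Union>C\<in>cells. E C)" using C by blast
    qed
    have "measure M {\<omega> \<in> space M.
            (SUP x\<in>unit_cube.
               \<bar>((1 / real n) * real (card {i \<in> {1..n}. X i \<omega> \<in> grid_cell (m n) x}))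
                  / measure M {\<omega>' \<in> space M. X 1 \<omega>' \<in> grid_cell (m n) x} - 1\<bar>)
            * (ln (real n)) powr (3 / 2) > \<epsilon>} \<le> measure M (\<Union>C\<in>cells. E C)"
      by (rule P.finite_measure_mono[OF sub]) (use cfin Esets in auto)
    also have "\<dots> \<le> (\<Sum>C\<in>cells. measure M (E C))"
      by (rule measure_UNION_le[OF cfin]) (use Esets in auto)
    also have "\<dots> \<le> (\<Sum>C\<in>cells. 2 * exp (- (c * lg ^ 2)))"
      by (rule sum_mono) (use perE in auto)
    also have "\<dots> = real (card cells) * (2 * exp (- (c * lg ^ 2)))" by simp
    also have "\<dots> \<le> real n * (2 * exp (- (c * lg ^ 2)))"
    proof (rule mult_right_mono)
      have "real (card cells) \<le> real mm ^ p" using ccard by (metis of_nat_le_iff of_nat_power)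
      also have "\<dots> \<le> lg ^ 5 * real mm ^ p" using lg mm by (simp add: one_le_power)
      also have "\<dots> \<le> real n" by (rule A3)
      finally show "real (card cells) \<le> real n" .
    qed simp
    also have "\<dots> = B n" unfolding B_def lg_def by simp
    finally show ?thesis .
  qed
  show "(\<lambda>n. measure M {\<omega> \<in> space M.
            (SUP x\<in>unit_cube.
               \<bar>((1 / real n) * real (card {i \<in> {1..n}. X i \<omega> \<in> grid_cell (m n) x}))
                  / measure M {\<omega>' \<in> space M. X 1 \<omega>' \<in> grid_cell (m n) x} - 1\<bar>)
            * (ln (real n)) powr (3 / 2) > \<epsilon>}) \<longlonglongrightarrow> 0"
  proof (rule tendsto_sandwich[OF _ _ tendsto_const B])
    show "\<forall>\<^sub>F n in sequentially. 0 \<le> measure M {\<omega> \<in> space M.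
            (SUP x\<in>unit_cube.
               \<bar>((1 / real n) * real (card {i \<in> {1..n}. X i \<omega> \<in> grid_cell (m n) x}))
                  / measure M {\<omega>' \<in> space M. X 1 \<omega>' \<in> grid_cell (m n) x} - 1\<bar>)
            * (ln (real n)) powr (3 / 2) > \<epsilon>}" by simp
    show "\<forall>\<^sub>F n in sequentially. measure M {\<omega> \<in> space M.
            (SUP x\<in>unit_cube.
               \<bar>((1 / real n) * real (card {i \<in> {1..n}. X i \<omega> \<in> grid_cell (m n) x}))
                  / measure M {\<omega>' \<in> space M. X 1 \<omega>' \<in> grid_cell (m n) x} - 1\<bar>)
            * (ln (real n)) powr (3 / 2) > \<epsilon>} \<le> B n"
      using ev1 ev2 ev3 by eventually_elim (rule key)
  qed
qed

end
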